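(* Let $N\ge 2$ and let $A_1,\dots,A_N$ be distinct Boolean variables. Then $$A_1\wedge A_2\wedge\dots\wedge A_{N-1}\wedge A_N=(A_1<1)<((A_2<1)<\cdots((A_{N-1}<1)<A_N)\cdots)$$ as Boolean functions, and this right-hand side, which contains exactly $N-1$ occurrences of the constant $1$ and exactly one occurrence of each variable $A_i$, is a minimal $(<,1)$-representation of $A_1\wedge\dots\wedge A_N$, i.e. no $(<,1)$-expression representing $A_1\wedge\dots\wedge A_N$ uses fewer occurrences of the operation $<$.
   Context: The binary Boolean operation $<$ (Strict Boolean Inequality) is defined by $A<B=(\neg A)\wedge B$, i.e. $A<B=1$ iff $A=0$ and $B=1$. A $(<,1)$-representation (or $(<,1)$-expression) of a Boolean function of variables $A_1,\dots,A_N$ is a formula built from the variables $A_1,\dots,A_N$ and the constant $1$ using only the binary operation $<$, which computes that function; its cost is the number of occurrences of $<$ (number of gates), and a representation is minimal if no representation of the same function has smaller cost. *)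

theory Defs
  imports Main
begin

datatype lform = Var nat | One | Lt lform lform

fun eval :: "(nat \<Rightarrow> bool) \<Rightarrow> lform \<Rightarrow> bool" where
  "eval env (Var i) = env i"
| "eval env One = True"
| "eval env (Lt a b) = ((\<not> eval env a) \<and> eval env b)"

fun cost :: "lform \<Rightarrow> nat" where
  "cost (Var i) = 0"
| "cost One = 0"
| "cost (Lt a b) = Suc (cost a + cost b)"

fun vars :: "lform \<Rightarrow> nat set" where
  "vars (Var i) = {i}"
| "vars One = {}"
| "vars (Lt a b) = vars a \<union> vars b"

fun count_one :: "lform \<Rightarrow> nat" where
  "count_one (Var i) = 0"
| "count_one One = 1"
| "count_one (Lt a b) = count_one a + count_one b"

fun count_var :: "nat \<Rightarrow> lform \<Rightarrow> nat" where
  "count_var j (Var i) = (if i = j then 1 else 0)"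
| "count_var j One = 0"
| "count_var j (Lt a b) = count_var j a + count_var j b"

definition conj_rep :: "nat \<Rightarrow> lform" where
  "conj_rep N = foldr (\<lambda>i acc. Lt (Lt (Var i) One) acc) [1..<N] (Var N)"

definition represents_conj :: "nat \<Rightarrow> lform \<Rightarrow> bool" where
  "represents_conj N f \<longleftrightarrow> vars f \<subseteq> {1..N} \<and>
     (\<forall>env. eval env f = (\<forall>i\<in>{1..N}. env i))"

end

theory Submission
  imports Defs
begin

definition FF :: "nat \<Rightarrow> lform \<Rightarrow> lform" where
  "FF = (\<lambda>i acc. Lt (Lt (Var i) One) acc)"

lemma fold_props:
  "eval env (foldr FF xs (Var n)) = ((\<forall>i\<in>set xs. env i) \<and> env n)
   \<and> vars (foldr FF xs (Var n)) = set xs \<union> {n}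
   \<and> count_one (foldr FF xs (Var n)) = length xs
   \<and> cost (foldr FF xs (Var n)) = 2 * length xs
   \<and> (\<forall>j. count_var j (foldr FF xs (Var n)) = count_list xs j + (if j = n then 1 else 0))"
  by (induction xs) (auto simp: FF_def)

lemma count_distinct: "distinct xs \<Longrightarrow> count_list xs x = (if x \<in> set xs then 1 else 0)"
  by (induction xs) auto

lemma conj_rep_eq: "conj_rep N = foldr FF [1..<N] (Var N)"
  unfolding conj_rep_def FF_def by simp

lemma eval_notin: "x \<notin> vars h \<Longrightarrow> eval (\<lambda>i. i \<noteq> x) h = eval (\<lambda>_. True) h"
  by (induction h) auto

definition SS :: "lform \<Rightarrow> nat set" where
  "SS h = {x \<in> vars h. eval (\<lambda>i. i \<noteq> x) h \<noteq> eval (\<lambda>_. True) h}"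

lemma SS_fin: "finite (SS h)"
proof -
  have "finite (vars h)" by (induction h) auto
  thus ?thesis unfolding SS_def by simp
qed

lemma key: "2 * card (SS h) + (if eval (\<lambda>_. True) h then 0 else 1) \<le> cost h + 2"
proof (induction h)
  case (Var x)
  have "SS (Var x) \<subseteq> {x}" unfolding SS_def by auto
  hence "card (SS (Var x)) \<le> card {x}" by (intro card_mono) auto
  hence "card (SS (Var x)) \<le> 1" by simp
  thus ?case by simp
next
  case One
  thus ?case by (simp add: SS_def)
next
  case (Lt a b)
  let ?t = "\<lambda>h. eval (\<lambda>_. True) h"
  let ?e = "\<lambda>x h. eval (\<lambda>i. i \<noteq> x) h"
  have va: "?e x a \<noteq> ?t a \<Longrightarrow> x \<in> vars a" for x using eval_notin by blast
  have vb: "?e x b \<noteq> ?t b \<Longrightarrow> x \<in> vars b" for x using eval_notin by blast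
  show ?case
  proof (cases "?t (Lt a b)")
    case True
    hence a1: "\<not> ?t a" and b1: "?t b" by auto
    have "SS (Lt a b) \<subseteq> SS a \<union> SS b"
      unfolding SS_def using a1 b1 va vb by auto
    hence "card (SS (Lt a b)) \<le> card (SS a) + card (SS b)"
      by (meson SS_fin card_Un_le card_mono finite_UnI order_trans)
    moreover have "2 * card (SS a) + 1 \<le> cost a + 2" using Lt.IH(1) a1 by simp
    moreover have "2 * card (SS b) \<le> cost b + 2" using Lt.IH(2) b1 by simp
    ultimately show ?thesis using True by simp
  next
    case False
    show ?thesis
    proof (cases "?t b")
      case False
      have "SS (Lt a b) \<subseteq> SS b" unfolding SS_def using False vb by auto
      hence "card (SS (Lt a b)) \<le> card (SS b)" by (simp add: SS_fin card_mono)
      moreover have "2 * card (SS b) + 1 \<le> cost b + 2" using Lt.IH(2) False by simp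
      ultimately show ?thesis using \<open>\<not> ?t (Lt a b)\<close> by simp
    next
      case True
      hence a1: "?t a" using \<open>\<not> ?t (Lt a b)\<close> by simp
      have "SS (Lt a b) \<subseteq> SS a" unfolding SS_def using a1 va by auto
      hence "card (SS (Lt a b)) \<le> card (SS a)" by (simp add: SS_fin card_mono)
      moreover have "2 * card (SS a) \<le> cost a + 2" using Lt.IH(1) a1 by simp
      ultimately show ?thesis using \<open>\<not> ?t (Lt a b)\<close> by simp
    qed
  qed
qed

lemma lower: assumes "represents_conj N f" shows "2 * N \<le> cost f + 2"
proof -
  have ev: "\<And>env. eval env f = (\<forall>i\<in>{1..N}. env i)"
    using assms unfolding represents_conj_def by blast
  have t: "eval (\<lambda>_. True) f" using ev by simp
  have "{1..N} \<subseteq> SS f"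
  proof
    fix x assume x: "x \<in> {1..N}"
    have "\<not> eval (\<lambda>i. i \<noteq> x) f" using ev x by auto
    moreover hence "x \<in> vars f" using eval_notin t by metis
    ultimately show "x \<in> SS f" using t unfolding SS_def by auto
  qed
  hence "card {1..N} \<le> card (SS f)" using SS_fin by (rule card_mono[rotated])
  hence "N \<le> card (SS f)" by simp
  thus ?thesis using key[of f] t by simp
qed

theorem mainTheorem4:
  fixes N :: nat
  assumes "N \<ge> 2"
  shows "represents_conj N (conj_rep N)
    \<and> count_one (conj_rep N) = N - 1
    \<and> (\<forall>i\<in>{1..N}. count_var i (conj_rep N) = 1)
    \<and> (\<forall>f. represents_conj N f \<longrightarrow> cost (conj_rep N) \<le> cost f)"
proof -
  note P = fold_props[of _ "[1..<N]" N, folded conj_rep_eq]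
  have r: "represents_conj N (conj_rep N)"
    unfolding represents_conj_def using P assms by auto
  have c: "\<forall>i\<in>{1..N}. count_var i (conj_rep N) = 1"
  proof
    fix i assume i: "i \<in> {1..N}"
    have "count_list [1..<N] i = (if i < N then 1 else 0)"
      using i by (simp add: count_distinct)
    moreover have "count_var i (conj_rep N) = count_list [1..<N] i + (if i = N then 1 else 0)"
      using P by blast
    ultimately show "count_var i (conj_rep N) = 1" using i by auto
  qed
  have m: "\<forall>f. represents_conj N f \<longrightarrow> cost (conj_rep N) \<le> cost f"
  proof (intro allI impI)
    fix f assume "represents_conj N f"
    hence "2 * N \<le> cost f + 2" by (rule lower)
    moreover have "cost (conj_rep N) = 2 * (N - 1)" using P by simp
    ultimately show "cost (conj_rep N) \<le> cost f" using assms by simp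
  qed
  have "count_one (conj_rep N) = N - 1" using P by simp
  thus ?thesis using r c m by blast
qed

end
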